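(* Let $G$ be a finite group and $n\ge1$, and let $a_1,\dots,a_{2n}$ be independent uniformly random elements of $G$. Then \[ Pr(a_{2n}a_{2n-1}\cdots a_1=a_1a_2\cdots a_{2n})=\frac{\sum_{x_1,\dots,x_n\in G}|Stab.Prod_n(x_1,\dots,x_n)|}{|G|^{2n}} \] and \[ Pr(a_{2n}a_{2n-1}\cdots a_1=a_1a_2\cdots a_{2n})=\sum_{i_1,\dots,i_n,j=1}^{c(G)}\frac{|\Omega_j|\cdot c_{i_1,\dots,i_n;j}(G)^2}{|\Omega_{i_1}|\cdots|\Omega_{i_n}|\cdot|G|^n}. \]
   Context: $c(G)$ is the number of conjugacy classes of $G$, and $\Omega_1,\dots,\Omega_{c(G)}$ are these classes. For $g_1,\dots,g_n\in G$, $Stab.Prod_n(g_1,\dots,g_n)$ is the set of all tuples $(b_1,\dots,b_n)\in G^n$ with $b_1^{-1}g_1b_1\cdot b_2^{-1}g_2b_2\cdots b_n^{-1}g_nb_n=g_1g_2\cdots g_n$. $c_{i_1,\dots,i_n;j}(G)$ is the number of tuples $(x_1,\dots,x_n)$ with $x_t\in\Omega_{i_t}$ for all $t$ and $x_1x_2\cdots x_n=y$, for a fixed $y\in\Omega_j$. This number is independent of the choice of $y$. *)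

theory Defs
  imports Complex_Main "HOL-Algebra.Group"
begin

definition gprod :: "('a, 'b) monoid_scheme \<Rightarrow> 'a list \<Rightarrow> 'a" where
  "gprod G xs = foldr (\<lambda>x y. x \<otimes>\<^bsub>G\<^esub> y) xs \<one>\<^bsub>G\<^esub>"

definition tuples :: "('a, 'b) monoid_scheme \<Rightarrow> nat \<Rightarrow> 'a list set" where
  "tuples G m = {xs. length xs = m \<and> set xs \<subseteq> carrier G}"

definition stab_prod :: "('a, 'b) monoid_scheme \<Rightarrow> 'a list \<Rightarrow> 'a list set" where
  "stab_prod G gs = {bs \<in> tuples G (length gs).
     gprod G (map2 (\<lambda>b g. inv\<^bsub>G\<^esub> b \<otimes>\<^bsub>G\<^esub> g \<otimes>\<^bsub>G\<^esub> b) bs gs) = gprod G gs}"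

definition conj_class :: "('a, 'b) monoid_scheme \<Rightarrow> 'a \<Rightarrow> 'a set" where
  "conj_class G x = {inv\<^bsub>G\<^esub> g \<otimes>\<^bsub>G\<^esub> x \<otimes>\<^bsub>G\<^esub> g | g. g \<in> carrier G}"

definition conj_classes :: "('a, 'b) monoid_scheme \<Rightarrow> 'a set set" where
  "conj_classes G = conj_class G ` carrier G"

definition class_mult :: "('a, 'b) monoid_scheme \<Rightarrow> 'a set list \<Rightarrow> 'a set \<Rightarrow> nat" where
  "class_mult G Cs Om = card {xs. length xs = length Cs \<and> (\<forall>t<length Cs. xs ! t \<in> Cs ! t)
      \<and> gprod G xs = (SOME y. y \<in> Om)}"

end

theory Submission imports Defs begin

definition cj :: "('a, 'b) monoid_scheme \<Rightarrow> 'a \<Rightarrow> 'a \<Rightarrow> 'a" where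
  "cj G b x = inv\<^bsub>G\<^esub> b \<otimes>\<^bsub>G\<^esub> x \<otimes>\<^bsub>G\<^esub> b"

lemma gprod_Nil[simp]: "gprod G [] = \<one>\<^bsub>G\<^esub>" by (simp add: gprod_def)
lemma gprod_Cons[simp]: "gprod G (x#xs) = x \<otimes>\<^bsub>G\<^esub> gprod G xs" by (simp add: gprod_def)

lemma tuples_0[simp]: "tuples G 0 = {[]}" by (auto simp: tuples_def)
lemma tuples_Suc: "tuples G (Suc n) = (\<lambda>(x,xs). x#xs) ` (carrier G \<times> tuples G n)"
  by (auto simp: tuples_def length_Suc_conv image_iff)

lemma finite_tuples: "finite (carrier G) \<Longrightarrow> finite (tuples G n)"
  unfolding tuples_def using finite_lists_length_eq[of "carrier G" n] by (simp add: conj_commute)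

lemma sum_tuples_Suc:
  "(\<Sum>xs\<in>tuples G (Suc n). f xs) = (\<Sum>x\<in>carrier G. \<Sum>xs\<in>tuples G n. f (x#xs))"
proof -
  have inj: "inj_on (\<lambda>(x,xs). x#xs) (carrier G \<times> tuples G n)" by (auto simp: inj_on_def)
  have "(\<Sum>xs\<in>tuples G (Suc n). f xs) = sum f ((\<lambda>(x,xs). x#xs) ` (carrier G \<times> tuples G n))"
    by (simp only: tuples_Suc)
  also have "\<dots> = sum (f \<circ> (\<lambda>(x,xs). x#xs)) (carrier G \<times> tuples G n)"
    by (rule sum.reindex[OF inj])
  also have "\<dots> = (\<Sum>(x,xs)\<in>carrier G \<times> tuples G n. f (x#xs))"
    by (rule sum.cong) auto
  also have "\<dots> = (\<Sum>x\<in>carrier G. \<Sum>xs\<in>tuples G n. f (x#xs))"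
    by (rule sum.cartesian_product[symmetric])
  finally show ?thesis .
qed

lemma card_filter_sum: "finite S \<Longrightarrow> card {x\<in>S. P x} = (\<Sum>x\<in>S. if P x then 1 else 0 :: nat)"
  by (simp add: sum.inter_filter[symmetric])

lemma sum_ind_single: assumes "finite S" "c \<in> S" shows "(\<Sum>g\<in>S. if c = g \<and> Q g then 1 else 0 :: nat) = (if Q c then 1 else 0)"
proof -
  have "(\<Sum>g\<in>S. if c = g \<and> Q g then 1 else 0 :: nat) = (\<Sum>g\<in>S. if g = c then (if Q c then 1 else 0) else 0)"
    by (rule sum.cong) auto
  then show ?thesis using sum.delta[of S c "\<lambda>_. if Q c then 1 else (0::nat)"] assms by simp
qed

definition NN :: "('a, 'b) monoid_scheme \<Rightarrow> nat \<Rightarrow> 'a \<Rightarrow> 'a \<Rightarrow> nat" where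
  "NN G n g h = (\<Sum>a\<in>tuples G (2*n). if gprod G a = g \<and> gprod G (rev a) = h then 1 else 0)"
definition MM :: "('a, 'b) monoid_scheme \<Rightarrow> nat \<Rightarrow> 'a \<Rightarrow> 'a \<Rightarrow> nat" where
  "MM G n g h = (\<Sum>ys\<in>tuples G n. \<Sum>us\<in>tuples G n.
      if gprod G ys = g \<and> gprod G (rev (map2 (cj G) us ys)) = h then 1 else 0)"

definition WW :: "('a, 'b) monoid_scheme \<Rightarrow> 'a set list \<Rightarrow> 'a \<Rightarrow> nat" where
  "WW G Cs g = (\<Sum>ws\<in>listset Cs. if gprod G ws = g then 1 else 0)"

lemma listset_Cons_img: "listset (A#As) = (\<lambda>(x,xs). x#xs) ` (A \<times> listset As)"
  by (auto simp: set_Cons_def)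

lemma listset_char: "listset Cs = {ws. length ws = length Cs \<and> (\<forall>t<length Cs. ws!t \<in> Cs!t)}"
proof (induction Cs)
  case Nil
  then show ?case by simp
next
  case (Cons A As)
  show ?case
  proof (intro equalityI subsetI)
    fix ws assume "ws \<in> listset (A#As)"
    then show "ws \<in> {ws. length ws = length (A#As) \<and> (\<forall>t<length (A#As). ws!t \<in> (A#As)!t)}"
      using Cons by (auto simp: set_Cons_def nth_Cons split: nat.splits)
  next
    fix ws assume w: "ws \<in> {ws. length ws = length (A#As) \<and> (\<forall>t<length (A#As). ws!t \<in> (A#As)!t)}"
    then obtain x xs where ws: "ws = x#xs" by (cases ws) auto
    have "x \<in> A" using w ws by force
    moreover have "xs \<in> listset As" using w ws Cons by force
    ultimately show "ws \<in> listset (A#As)" by (auto simp: set_Cons_def ws)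
  qed
qed

lemma sum_listset_Cons:
  "(\<Sum>xs\<in>listset (A#As). f xs) = (\<Sum>x\<in>A. \<Sum>xs\<in>listset As. f (x#xs))"
proof -
  have inj: "inj_on (\<lambda>(x,xs). x#xs) (A \<times> listset As)" by (auto simp: inj_on_def)
  have "(\<Sum>xs\<in>listset (A#As). f xs) = sum f ((\<lambda>(x,xs). x#xs) ` (A \<times> listset As))"
    by (simp only: listset_Cons_img)
  also have "\<dots> = sum (f \<circ> (\<lambda>(x,xs). x#xs)) (A \<times> listset As)"
    by (rule sum.reindex[OF inj])
  also have "\<dots> = (\<Sum>(x,xs)\<in>A \<times> listset As. f (x#xs))"
    by (rule sum.cong) auto
  also have "\<dots> = (\<Sum>x\<in>A. \<Sum>xs\<in>listset As. f (x#xs))"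
    by (rule sum.cartesian_product[symmetric])
  finally show ?thesis .
qed

lemma WW_Nil[simp]: "WW G [] g = (if \<one>\<^bsub>G\<^esub> = g then 1 else 0)" by (simp add: WW_def)

locale fgroup = group + assumes fin: "finite (carrier G)"
begin

lemma gprod_closed[intro,simp]: "set xs \<subseteq> carrier G \<Longrightarrow> gprod G xs \<in> carrier G"
  by (induction xs) auto

lemma cj_closed[intro,simp]: "b \<in> carrier G \<Longrightarrow> x \<in> carrier G \<Longrightarrow> cj G b x \<in> carrier G"
  by (simp add: cj_def)

lemma tuples_Cons: "(x#xs) \<in> tuples G (Suc n) \<longleftrightarrow> x \<in> carrier G \<and> xs \<in> tuples G n"
  by (auto simp: tuples_def)

lemma set_map2_sub: assumes "set bs \<subseteq> carrier G" "set xs \<subseteq> carrier G" shows "set (map2 (cj G) bs xs) \<subseteq> carrier G"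
proof
  fix z assume "z \<in> set (map2 (cj G) bs xs)"
  then obtain b x where "(b,x) \<in> set (zip bs xs)" "z = cj G b x" by auto
  then show "z \<in> carrier G" using assms by (meson cj_closed in_mono set_zip_leftD set_zip_rightD)
qed

lemma solve_r: "a \<in> carrier G \<Longrightarrow> c \<in> carrier G \<Longrightarrow> g \<in> carrier G \<Longrightarrow> (a \<otimes> c = g) = (a = g \<otimes> inv c)"
  using inv_solve_right by metis
lemma solve_l: "a \<in> carrier G \<Longrightarrow> c \<in> carrier G \<Longrightarrow> g \<in> carrier G \<Longrightarrow> (c \<otimes> a = g) = (a = inv c \<otimes> g)"
  using inv_solve_left by metis

lemma gprod_append: "set xs \<subseteq> carrier G \<Longrightarrow> set ys \<subseteq> carrier G \<Longrightarrow> gprod G (xs @ ys) = gprod G xs \<otimes> gprod G ys"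
  by (induction xs) (auto simp: m_assoc)

lemma gprod_rev_Cons: "set xs \<subseteq> carrier G \<Longrightarrow> x \<in> carrier G \<Longrightarrow> gprod G (rev (x#xs)) = gprod G (rev xs) \<otimes> x"
  by (simp add: gprod_append)

lemma tuples_set: "xs \<in> tuples G n \<Longrightarrow> set xs \<subseteq> carrier G" by (simp add: tuples_def)
lemma tuples_len: "xs \<in> tuples G n \<Longrightarrow> length xs = n" by (simp add: tuples_def)

lemma cj_mult: "u \<in> carrier G \<Longrightarrow> p \<in> carrier G \<Longrightarrow> y \<in> carrier G \<Longrightarrow> p \<otimes> cj G (u \<otimes> p) y = cj G u y \<otimes> p"
  by (simp add: cj_def inv_mult_group m_assoc[symmetric])

lemma sum_shift_swap:
  assumes p: "p \<in> carrier G" and y: "y \<in> carrier G" and g: "g \<in> carrier G"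
  shows "(\<Sum>u\<in>carrier G. if cj G u y \<otimes> p = g then 1 else 0 :: nat) = (\<Sum>u\<in>carrier G. if p \<otimes> cj G u y = g then 1 else 0)"
proof -
  have "(\<Sum>u\<in>carrier G. if p \<otimes> cj G u y = g then 1 else 0 :: nat) = (\<Sum>u\<in>carrier G. if p \<otimes> cj G (u \<otimes> p) y = g then 1 else 0)"
    by (rule sum.reindex_bij_witness[where j="\<lambda>u. u \<otimes> inv p" and i="\<lambda>u. u \<otimes> p"])
       (auto simp: p m_assoc)
  also have "\<dots> = (\<Sum>u\<in>carrier G. if cj G u y \<otimes> p = g then 1 else 0 :: nat)"
    by (rule sum.cong) (auto simp: cj_mult p y)
  finally show ?thesis by simp
qed

lemma FR:
  assumes "set ys \<subseteq> carrier G" "g \<in> carrier G"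
  shows "(\<Sum>us\<in>tuples G (length ys). if gprod G (map2 (cj G) us ys) = g then 1 else 0::nat)
       = (\<Sum>us\<in>tuples G (length ys). if gprod G (rev (map2 (cj G) us ys)) = g then 1 else 0)"
  using assms
proof (induction ys arbitrary: g)
  case Nil
  then show ?case by simp
next
  case (Cons y ys)
  let ?P = "\<lambda>us. gprod G (map2 (cj G) us ys)"
  let ?Q = "\<lambda>us. gprod G (rev (map2 (cj G) us ys))"
  have y: "y \<in> carrier G" and ys: "set ys \<subseteq> carrier G" using Cons.prems by auto
  have PQc: "?P us \<in> carrier G" "?Q us \<in> carrier G" if "us \<in> tuples G (length ys)" for us
    using set_map2_sub[OF tuples_set[OF that] ys] by auto
  have "(\<Sum>us\<in>tuples G (length (y#ys)). if gprod G (rev (map2 (cj G) us (y#ys))) = g then 1 else 0::nat)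
      = (\<Sum>u\<in>carrier G. \<Sum>us\<in>tuples G (length ys). if ?Q us \<otimes> cj G u y = g then 1 else 0)"
    apply (simp add: sum_tuples_Suc)
    apply (intro sum.cong refl)
    apply (subst gprod_append)
    using set_map2_sub[OF tuples_set ys] y by auto
  also have "\<dots> = (\<Sum>u\<in>carrier G. \<Sum>us\<in>tuples G (length ys). if ?Q us = g \<otimes> inv (cj G u y) then 1 else 0)"
    by (intro sum.cong refl) (simp add: solve_r PQc y Cons.prems)
  also have "\<dots> = (\<Sum>u\<in>carrier G. \<Sum>us\<in>tuples G (length ys). if ?P us = g \<otimes> inv (cj G u y) then 1 else 0)"
    by (intro sum.cong refl Cons.IH[symmetric]) (auto simp: ys y Cons.prems)
  also have "\<dots> = (\<Sum>u\<in>carrier G. \<Sum>us\<in>tuples G (length ys). if ?P us \<otimes> cj G u y = g then 1 else 0)"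
    by (intro sum.cong refl) (simp add: solve_r PQc y Cons.prems)
  also have "\<dots> = (\<Sum>us\<in>tuples G (length ys). \<Sum>u\<in>carrier G. if ?P us \<otimes> cj G u y = g then 1 else 0)"
    by (rule sum.swap)
  also have "\<dots> = (\<Sum>us\<in>tuples G (length ys). \<Sum>u\<in>carrier G. if cj G u y \<otimes> ?P us = g then 1 else 0)"
    by (intro sum.cong refl sum_shift_swap[symmetric]) (auto simp: PQc y Cons.prems)
  also have "\<dots> = (\<Sum>u\<in>carrier G. \<Sum>us\<in>tuples G (length ys). if cj G u y \<otimes> ?P us = g then 1 else 0)"
    by (rule sum.swap)
  also have "\<dots> = (\<Sum>us\<in>tuples G (length (y#ys)). if gprod G (map2 (cj G) us (y#ys)) = g then 1 else 0::nat)"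
    by (simp add: sum_tuples_Suc)
  finally show ?case by simp
qed

lemma NN_Suc:
  assumes g: "g \<in> carrier G" and h: "h \<in> carrier G"
  shows "NN G (Suc n) g h = (\<Sum>a1\<in>carrier G. \<Sum>a2\<in>carrier G. NN G n (inv (a1 \<otimes> a2) \<otimes> g) (h \<otimes> inv (a2 \<otimes> a1)))"
proof -
  have e: "2 * Suc n = Suc (Suc (2*n))" by simp
  show ?thesis
    unfolding NN_def e sum_tuples_Suc
  proof (intro sum.cong refl)
    fix a1 a2 a assume a1: "a1 \<in> carrier G" and a2: "a2 \<in> carrier G" and a: "a \<in> tuples G (2*n)"
    have X: "gprod G a \<in> carrier G" "gprod G (rev a) \<in> carrier G" using tuples_set[OF a] by auto
    have "gprod G (a1 # a2 # a) = g \<longleftrightarrow> (a1 \<otimes> a2) \<otimes> gprod G a = g"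
      using X a1 a2 by (simp add: m_assoc)
    also have "\<dots> \<longleftrightarrow> gprod G a = inv (a1 \<otimes> a2) \<otimes> g"
      using X a1 a2 g by (simp add: solve_l)
    finally have 1: "gprod G (a1 # a2 # a) = g \<longleftrightarrow> gprod G a = inv (a1 \<otimes> a2) \<otimes> g" .
    have "gprod G (rev (a1 # a2 # a)) = gprod G (rev a) \<otimes> (a2 \<otimes> a1)"
      using X a1 a2 tuples_set[OF a] by (simp add: gprod_append)
    then have 2: "gprod G (rev (a1 # a2 # a)) = h \<longleftrightarrow> gprod G (rev a) = h \<otimes> inv (a2 \<otimes> a1)"
      using X a1 a2 h by (simp add: solve_r)
    show "(if gprod G (a1 # a2 # a) = g \<and> gprod G (rev (a1 # a2 # a)) = h then 1 else 0) =
          (if gprod G a = inv (a1 \<otimes> a2) \<otimes> g \<and> gprod G (rev a) = h \<otimes> inv (a2 \<otimes> a1) then 1 else (0::nat))"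
      using 1 2 by simp
  qed
qed

lemma MM_Suc:
  assumes g: "g \<in> carrier G" and h: "h \<in> carrier G"
  shows "MM G (Suc n) g h = (\<Sum>y\<in>carrier G. \<Sum>u\<in>carrier G. MM G n (inv y \<otimes> g) (h \<otimes> inv (cj G u y)))"
proof -
  have "MM G (Suc n) g h = (\<Sum>y\<in>carrier G. \<Sum>ys\<in>tuples G n. \<Sum>u\<in>carrier G. \<Sum>us\<in>tuples G n.
      if gprod G ys = inv y \<otimes> g \<and> gprod G (rev (map2 (cj G) us ys)) = h \<otimes> inv (cj G u y) then 1 else 0)"
    unfolding MM_def sum_tuples_Suc
  proof (intro sum.cong refl)
    fix y ys u us assume y: "y \<in> carrier G" and ys: "ys \<in> tuples G n" and u: "u \<in> carrier G" and us: "us \<in> tuples G n"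
    have X: "gprod G ys \<in> carrier G" "gprod G (rev (map2 (cj G) us ys)) \<in> carrier G"
      using tuples_set[OF ys] set_map2_sub[OF tuples_set[OF us] tuples_set[OF ys]] by auto
    have 1: "gprod G (y # ys) = g \<longleftrightarrow> gprod G ys = inv y \<otimes> g" using X y g by (simp add: solve_l)
    have "gprod G (rev (map2 (cj G) (u # us) (y # ys))) = gprod G (rev (map2 (cj G) us ys)) \<otimes> cj G u y"
      using X y u set_map2_sub[OF tuples_set[OF us] tuples_set[OF ys]] by (simp add: gprod_append)
    then have 2: "gprod G (rev (map2 (cj G) (u # us) (y # ys))) = h \<longleftrightarrow> gprod G (rev (map2 (cj G) us ys)) = h \<otimes> inv (cj G u y)"
      using X y u h by (simp add: solve_r)
    show "(if gprod G (y # ys) = g \<and> gprod G (rev (map2 (cj G) (u # us) (y # ys))) = h then 1 else 0) =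
         (if gprod G ys = inv y \<otimes> g \<and> gprod G (rev (map2 (cj G) us ys)) = h \<otimes> inv (cj G u y) then 1 else (0::nat))"
      using 1 2 by simp
  qed
  also have "\<dots> = (\<Sum>y\<in>carrier G. \<Sum>u\<in>carrier G. \<Sum>ys\<in>tuples G n. \<Sum>us\<in>tuples G n.
      if gprod G ys = inv y \<otimes> g \<and> gprod G (rev (map2 (cj G) us ys)) = h \<otimes> inv (cj G u y) then 1 else 0)"
    by (intro sum.cong refl sum.swap)
  finally show ?thesis unfolding MM_def .
qed

lemma reindex_pair:
  assumes a1: "a1 \<in> carrier G"
  shows "(\<Sum>a2\<in>carrier G. f (a1 \<otimes> a2) (a2 \<otimes> a1)) = (\<Sum>y\<in>carrier G. f y (cj G a1 y) :: nat)"
proof (rule sum.reindex_bij_witness[where j="\<lambda>a2. a1 \<otimes> a2" and i="\<lambda>y. inv a1 \<otimes> y"])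
  fix a2 assume a2: "a2 \<in> carrier G"
  have "cj G a1 (a1 \<otimes> a2) = a2 \<otimes> a1" using a1 a2 by (simp add: cj_def m_assoc[symmetric])
  then show "f (a1 \<otimes> a2) (cj G a1 (a1 \<otimes> a2)) = f (a1 \<otimes> a2) (a2 \<otimes> a1)" by simp
qed (auto simp: a1 m_assoc[symmetric])

lemma NN_MM: "g \<in> carrier G \<Longrightarrow> h \<in> carrier G \<Longrightarrow> NN G n g h = MM G n g h"
proof (induction n arbitrary: g h)
  case 0
  then show ?case by (simp add: NN_def MM_def)
next
  case (Suc n)
  have "NN G (Suc n) g h = (\<Sum>a1\<in>carrier G. \<Sum>a2\<in>carrier G. NN G n (inv (a1 \<otimes> a2) \<otimes> g) (h \<otimes> inv (a2 \<otimes> a1)))"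
    by (rule NN_Suc[OF Suc.prems])
  also have "\<dots> = (\<Sum>a1\<in>carrier G. \<Sum>y\<in>carrier G. NN G n (inv y \<otimes> g) (h \<otimes> inv (cj G a1 y)))"
    by (intro sum.cong refl reindex_pair[where f="\<lambda>p q. NN G n (inv p \<otimes> g) (h \<otimes> inv q)"])
  also have "\<dots> = (\<Sum>y\<in>carrier G. \<Sum>a1\<in>carrier G. NN G n (inv y \<otimes> g) (h \<otimes> inv (cj G a1 y)))"
    by (rule sum.swap)
  also have "\<dots> = (\<Sum>y\<in>carrier G. \<Sum>u\<in>carrier G. MM G n (inv y \<otimes> g) (h \<otimes> inv (cj G u y)))"
    by (intro sum.cong refl Suc.IH) (auto simp: Suc.prems)
  also have "\<dots> = MM G (Suc n) g h" by (rule MM_Suc[OF Suc.prems, symmetric])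
  finally show ?case .
qed

lemma stab_card:
  assumes xs: "xs \<in> tuples G n"
  shows "card (stab_prod G xs) = (\<Sum>bs\<in>tuples G n. if gprod G (map2 (cj G) bs xs) = gprod G xs then 1 else 0)"
proof -
  have e: "(\<lambda>b g. inv b \<otimes> g \<otimes> b) = cj G" by (auto simp: cj_def fun_eq_iff)
  have "stab_prod G xs = {bs \<in> tuples G n. gprod G (map2 (cj G) bs xs) = gprod G xs}"
    unfolding stab_prod_def e using tuples_len[OF xs] by simp
  then show ?thesis by (simp add: card_filter_sum finite_tuples fin)
qed

lemma part1:
  "card {as \<in> tuples G (2*n). gprod G (rev as) = gprod G as} = (\<Sum>xs\<in>tuples G n. card (stab_prod G xs))"
proof -
  have "card {as \<in> tuples G (2*n). gprod G (rev as) = gprod G as}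
      = (\<Sum>a\<in>tuples G (2*n). if gprod G (rev a) = gprod G a then 1 else 0)"
    by (simp add: card_filter_sum finite_tuples fin)
  also have "\<dots> = (\<Sum>a\<in>tuples G (2*n). \<Sum>g\<in>carrier G. if gprod G a = g \<and> gprod G (rev a) = g then 1 else 0)"
    by (intro sum.cong refl sum_ind_single[symmetric]) (auto simp: fin tuples_set)
  also have "\<dots> = (\<Sum>g\<in>carrier G. NN G n g g)" unfolding NN_def by (rule sum.swap)
  also have "\<dots> = (\<Sum>g\<in>carrier G. MM G n g g)" by (intro sum.cong refl NN_MM)
  also have "\<dots> = (\<Sum>xs\<in>tuples G n. \<Sum>bs\<in>tuples G n. \<Sum>g\<in>carrier G.
       if gprod G xs = g \<and> gprod G (rev (map2 (cj G) bs xs)) = g then 1 else 0)"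
    unfolding MM_def by (subst sum.swap) (intro sum.cong refl sum.swap[symmetric])
  also have "\<dots> = (\<Sum>xs\<in>tuples G n. \<Sum>bs\<in>tuples G n. if gprod G (rev (map2 (cj G) bs xs)) = gprod G xs then 1 else 0)"
    by (intro sum.cong refl sum_ind_single) (auto simp: fin tuples_set)
  also have "\<dots> = (\<Sum>xs\<in>tuples G n. \<Sum>bs\<in>tuples G n. if gprod G (map2 (cj G) bs xs) = gprod G xs then 1 else 0)"
  proof (rule sum.cong[OF refl])
    fix xs assume xs: "xs \<in> tuples G n"
    show "(\<Sum>bs\<in>tuples G n. if gprod G (rev (map2 (cj G) bs xs)) = gprod G xs then 1 else 0) =
          (\<Sum>bs\<in>tuples G n. if gprod G (map2 (cj G) bs xs) = gprod G xs then 1 else (0::nat))"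
      using FR[OF tuples_set[OF xs], of "gprod G xs"] tuples_len[OF xs] tuples_set[OF xs] by simp
  qed
  also have "\<dots> = (\<Sum>xs\<in>tuples G n. card (stab_prod G xs))"
    by (intro sum.cong refl stab_card[symmetric])
  finally show ?thesis .
qed

abbreviation "cc \<equiv> conj_class G"

lemma cc_img: "cc x = (\<lambda>b. cj G b x) ` carrier G"
  by (auto simp: conj_class_def cj_def)

lemma cj_comp: "a \<in> carrier G \<Longrightarrow> b \<in> carrier G \<Longrightarrow> x \<in> carrier G \<Longrightarrow> cj G (a \<otimes> b) x = cj G b (cj G a x)"
  by (simp add: cj_def inv_mult_group m_assoc)

lemma cj_one[simp]: "x \<in> carrier G \<Longrightarrow> cj G \<one> x = x" by (simp add: cj_def)

lemma cj_inv1: "h \<in> carrier G \<Longrightarrow> p \<in> carrier G \<Longrightarrow> cj G (inv h) (cj G h p) = p"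
  by (simp add: cj_def m_assoc[symmetric]) (simp add: m_assoc)
lemma cj_inv2: "h \<in> carrier G \<Longrightarrow> p \<in> carrier G \<Longrightarrow> cj G h (cj G (inv h) p) = p"
  by (simp add: cj_def m_assoc[symmetric]) (simp add: m_assoc)

lemma cj_inj: "h \<in> carrier G \<Longrightarrow> p \<in> carrier G \<Longrightarrow> q \<in> carrier G \<Longrightarrow> (cj G h p = cj G h q) = (p = q)"
  by (metis cj_inv1)

lemma cc_sub: "x \<in> carrier G \<Longrightarrow> cc x \<subseteq> carrier G" by (auto simp: cc_img)
lemma cc_self: "x \<in> carrier G \<Longrightarrow> x \<in> cc x" unfolding cc_img by (rule image_eqI[where x=\<one>]) auto
lemma cc_eq: assumes x: "x \<in> carrier G" and y: "y \<in> cc x" shows "cc y = cc x"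
proof -
  obtain a where a: "a \<in> carrier G" and ya: "y = cj G a x" using y by (auto simp: cc_img)
  show ?thesis
  proof
    show "cc y \<subseteq> cc x" unfolding cc_img ya
    proof
      fix z assume "z \<in> (\<lambda>b. cj G b (cj G a x)) ` carrier G"
      then obtain b where b: "b \<in> carrier G" "z = cj G b (cj G a x)" by auto
      then show "z \<in> (\<lambda>b. cj G b x) ` carrier G" using a x by (auto simp: cj_comp[symmetric] intro!: image_eqI[where x="a \<otimes> b"])
    qed
    show "cc x \<subseteq> cc y" unfolding cc_img ya
    proof
      fix z assume "z \<in> (\<lambda>b. cj G b x) ` carrier G"
      then obtain b where b: "b \<in> carrier G" "z = cj G b x" by auto
      have "cj G (inv a \<otimes> b) (cj G a x) = z" using a b x by (simp add: cj_comp cj_inv1)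
      then show "z \<in> (\<lambda>b. cj G b (cj G a x)) ` carrier G" using a b by (auto intro!: image_eqI[where x="inv a \<otimes> b"])
    qed
  qed
qed

lemma cc_iff: "x \<in> carrier G \<Longrightarrow> y \<in> carrier G \<Longrightarrow> (y \<in> cc x) = (cc y = cc x)"
  using cc_eq cc_self by blast

lemma cc_cj: "x \<in> carrier G \<Longrightarrow> w \<in> cc x \<Longrightarrow> h \<in> carrier G \<Longrightarrow> cj G h w \<in> cc x"
  by (metis cc_eq cc_img cc_sub image_eqI subsetD)

lemma fin_cc: "x \<in> carrier G \<Longrightarrow> finite (cc x)" using cc_sub fin finite_subset by blast

definition stab :: "'a \<Rightarrow> nat" where "stab x = card {b \<in> carrier G. cj G b x = x}"

lemma fiber_card:
  assumes x: "x \<in> carrier G" and w: "w \<in> cc x"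
  shows "card {b \<in> carrier G. cj G b x = w} = stab x"
proof -
  obtain b0 where b0: "b0 \<in> carrier G" and wb: "w = cj G b0 x" using w by (auto simp: cc_img)
  have "(\<Sum>b\<in>carrier G. if cj G b x = w then 1 else 0::nat) = (\<Sum>c\<in>carrier G. if cj G (c \<otimes> b0) x = w then 1 else 0)"
    by (rule sum.reindex_bij_witness[where j="\<lambda>b. b \<otimes> inv b0" and i="\<lambda>c. c \<otimes> b0"])
       (auto simp: b0 m_assoc)
  also have "\<dots> = (\<Sum>c\<in>carrier G. if cj G c x = x then 1 else 0)"
    by (rule sum.cong) (auto simp: cj_comp b0 x wb cj_inj)
  finally show ?thesis by (simp add: stab_def card_filter_sum fin)
qed

lemma sum_orbit:
  assumes x: "x \<in> carrier G"
  shows "(\<Sum>b\<in>carrier G. f (cj G b x)) = stab x * (\<Sum>w\<in>cc x. f w :: nat)"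
proof -
  have "(\<Sum>b\<in>carrier G. f (cj G b x)) = (\<Sum>w\<in>(\<lambda>b. cj G b x) ` carrier G. \<Sum>b\<in>{b \<in> carrier G. cj G b x = w}. f (cj G b x))"
    by (rule sum.image_gen[OF fin])
  also have "\<dots> = (\<Sum>w\<in>cc x. \<Sum>b\<in>{b \<in> carrier G. cj G b x = w}. f w)"
    unfolding cc_img[symmetric] by (intro sum.cong refl) auto
  also have "\<dots> = (\<Sum>w\<in>cc x. stab x * f w)"
    by (intro sum.cong refl) (simp add: fiber_card x)
  finally show ?thesis by (simp add: sum_distrib_left)
qed

lemma stab_cc: "x \<in> carrier G \<Longrightarrow> stab x * card (cc x) = card (carrier G)"
  using sum_orbit[of x "\<lambda>_. 1"] by simp

lemma listset_sub: "\<forall>C\<in>set Cs. C \<subseteq> carrier G \<Longrightarrow> listset Cs \<subseteq> tuples G (length Cs)"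
proof
  fix ws assume "\<forall>C\<in>set Cs. C \<subseteq> carrier G" "ws \<in> listset Cs"
  then show "ws \<in> tuples G (length Cs)" unfolding listset_char tuples_def
    by (auto simp: in_set_conv_nth) (metis nth_mem subsetD)
qed

lemma finite_listset: "\<forall>C\<in>set Cs. C \<subseteq> carrier G \<Longrightarrow> finite (listset Cs)"
  using listset_sub finite_subset finite_tuples fin by metis

lemma count_bs:
  assumes "set xs \<subseteq> carrier G" "g \<in> carrier G"
  shows "(\<Sum>bs\<in>tuples G (length xs). if gprod G (map2 (cj G) bs xs) = g then 1 else 0)
       = prod_list (map stab xs) * WW G (map cc xs) g"
  using assms
proof (induction xs arbitrary: g)
  case Nil
  then show ?case by (simp add: WW_def)
next
  case (Cons x xs)
  have x: "x \<in> carrier G" and xs: "set xs \<subseteq> carrier G" using Cons.prems by auto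
  have ccs: "\<forall>C\<in>set (map cc xs). C \<subseteq> carrier G" using xs cc_sub by auto
  have "(\<Sum>bs\<in>tuples G (length (x#xs)). if gprod G (map2 (cj G) bs (x#xs)) = g then 1 else 0)
      = (\<Sum>b\<in>carrier G. \<Sum>bs\<in>tuples G (length xs). if gprod G (map2 (cj G) bs xs) = inv (cj G b x) \<otimes> g then 1 else 0)"
    apply (simp add: sum_tuples_Suc)
    apply (intro sum.cong refl)
    apply (subst solve_l)
    using set_map2_sub[OF tuples_set xs] x Cons.prems by auto
  also have "\<dots> = (\<Sum>b\<in>carrier G. prod_list (map stab xs) * WW G (map cc xs) (inv (cj G b x) \<otimes> g))"
    by (intro sum.cong refl Cons.IH) (auto simp: xs x Cons.prems)
  also have "\<dots> = prod_list (map stab xs) * (stab x * (\<Sum>w\<in>cc x. WW G (map cc xs) (inv w \<otimes> g)))"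
    by (simp add: sum_distrib_left[symmetric] sum_orbit[OF x, where f="\<lambda>w. WW G (map cc xs) (inv w \<otimes> g)"])
  also have "(\<Sum>w\<in>cc x. WW G (map cc xs) (inv w \<otimes> g)) = WW G (map cc (x#xs)) g"
    unfolding WW_def list.map(2) sum_listset_Cons
    apply (intro sum.cong refl)
    apply (simp only: gprod_Cons)
    apply (subst solve_l)
    using listset_sub[OF ccs] tuples_set cc_sub[OF x] Cons.prems by auto
  finally show ?case by (simp add: mult_ac)
qed

lemma mul_inv_cancel_left[simp]: "a \<in> carrier G \<Longrightarrow> x \<in> carrier G \<Longrightarrow> a \<otimes> (inv a \<otimes> x) = x"
  by (simp add: m_assoc[symmetric])
lemma inv_mul_cancel_left[simp]: "a \<in> carrier G \<Longrightarrow> x \<in> carrier G \<Longrightarrow> inv a \<otimes> (a \<otimes> x) = x"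
  by (simp add: m_assoc[symmetric])

lemma gprod_map_cj: "set ws \<subseteq> carrier G \<Longrightarrow> h \<in> carrier G \<Longrightarrow> gprod G (map (cj G h) ws) = cj G h (gprod G ws)"
  by (induction ws) (auto simp: cj_def m_assoc)

definition classlists :: "nat \<Rightarrow> 'a set list set" where
  "classlists n = {Cs. length Cs = n \<and> set Cs \<subseteq> conj_classes G}"

lemma classes_sub: "C \<in> conj_classes G \<Longrightarrow> C \<subseteq> carrier G"
  by (auto simp: conj_classes_def dest: cc_sub)

lemma classlist_sub: "Cs \<in> classlists n \<Longrightarrow> \<forall>C\<in>set Cs. C \<subseteq> carrier G"
  by (auto simp: classlists_def dest!: classes_sub)

lemma class_closed: "C \<in> conj_classes G \<Longrightarrow> w \<in> C \<Longrightarrow> h \<in> carrier G \<Longrightarrow> cj G h w \<in> C"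
  by (auto simp: conj_classes_def intro: cc_cj)

lemma listset_map_cj:
  assumes "set Cs \<subseteq> conj_classes G" "ws \<in> listset Cs" "h \<in> carrier G"
  shows "map (cj G h) ws \<in> listset Cs"
  using assms unfolding listset_char by (auto intro!: class_closed)

lemma listset_carrier: "set Cs \<subseteq> conj_classes G \<Longrightarrow> ws \<in> listset Cs \<Longrightarrow> set ws \<subseteq> carrier G"
  using listset_sub[of Cs] classes_sub by (auto simp: tuples_def)

lemma WW_cj:
  assumes Cs: "set Cs \<subseteq> conj_classes G" and h: "h \<in> carrier G" and g: "g \<in> carrier G"
  shows "WW G Cs (cj G h g) = WW G Cs g"
  unfolding WW_def
proof (rule sum.reindex_bij_witness[where j="map (cj G (inv h))" and i="map (cj G h)"])
  fix a assume a: "a \<in> listset Cs"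
  have ac: "set a \<subseteq> carrier G" by (rule listset_carrier[OF Cs a])
  show "map (cj G h) (map (cj G (inv h)) a) = a"
    using ac h by (induction a) (auto simp: cj_inv2)
  show "map (cj G (inv h)) a \<in> listset Cs" using listset_map_cj[OF Cs a] h by simp
  have "gprod G (map (cj G (inv h)) a) = g \<longleftrightarrow> gprod G a = cj G h g"
    using ac h g by (auto simp: gprod_map_cj cj_inv2 cj_inv1)
  then show "(if gprod G (map (cj G (inv h)) a) = g then 1 else 0) = (if gprod G a = cj G h g then 1 else (0::nat))"
    by simp
next
  fix b assume b: "b \<in> listset Cs"
  have bc: "set b \<subseteq> carrier G" by (rule listset_carrier[OF Cs b])
  show "map (cj G (inv h)) (map (cj G h) b) = b"
    using bc h by (induction b) (auto simp: cj_inv1)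
  show "map (cj G h) b \<in> listset Cs" using listset_map_cj[OF Cs b h] .
qed

lemma WW_class:
  assumes Cs: "set Cs \<subseteq> conj_classes G" and Om: "Om \<in> conj_classes G" and g: "g \<in> Om"
  shows "WW G Cs g = WW G Cs (SOME y. y \<in> Om)"
proof -
  obtain x where x: "x \<in> carrier G" and Omx: "Om = cc x" using Om by (auto simp: conj_classes_def)
  have "\<exists>y. y \<in> Om" using g by blast
  then have y: "(SOME y. y \<in> Om) \<in> Om" by (rule someI_ex)
  let ?y = "SOME y. y \<in> Om"
  have yc: "?y \<in> carrier G" using y Omx cc_sub[OF x] by auto
  have "cc ?y = cc x" using cc_eq[OF x] y Omx by simp
  then have "g \<in> cc ?y" using g Omx by simp
  then obtain h where h: "h \<in> carrier G" and gh: "g = cj G h ?y" by (auto simp: cc_img)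
  show ?thesis using WW_cj[OF Cs h yc] gh by simp
qed

lemma sum_sq_classes:
  assumes Cs: "set Cs \<subseteq> conj_classes G"
  shows "(\<Sum>g\<in>carrier G. WW G Cs g ^ 2) = (\<Sum>Om\<in>conj_classes G. card Om * WW G Cs (SOME y. y \<in> Om) ^ 2)"
proof -
  have "(\<Sum>g\<in>carrier G. WW G Cs g ^ 2) = (\<Sum>Om\<in>cc ` carrier G. \<Sum>g\<in>{g \<in> carrier G. cc g = Om}. WW G Cs g ^ 2)"
    by (rule sum.image_gen[OF fin])
  also have "\<dots> = (\<Sum>Om\<in>conj_classes G. \<Sum>g\<in>Om. WW G Cs (SOME y. y \<in> Om) ^ 2)"
    unfolding conj_classes_def
  proof (rule sum.cong[OF refl])
    fix Om assume "Om \<in> cc ` carrier G"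
    then obtain x where x: "x \<in> carrier G" and Omx: "Om = cc x" by auto
    have Om: "Om \<in> conj_classes G" using x Omx by (auto simp: conj_classes_def)
    have e: "{g \<in> carrier G. cc g = Om} = Om"
      using cc_iff[OF x] cc_sub[OF x] Omx by auto
    show "(\<Sum>g\<in>{g \<in> carrier G. cc g = Om}. WW G Cs g ^ 2) = (\<Sum>g\<in>Om. WW G Cs (SOME y. y \<in> Om) ^ 2)"
      unfolding e by (intro sum.cong refl) (simp add: WW_class[OF Cs Om])
  qed
  finally show ?thesis by simp
qed

lemma sum_WW_listset:
  assumes Cs: "set Cs \<subseteq> conj_classes G"
  shows "(\<Sum>xs\<in>listset Cs. WW G Cs (gprod G xs)) = (\<Sum>g\<in>carrier G. WW G Cs g ^ 2)"
proof -
  have L: "\<forall>C\<in>set Cs. C \<subseteq> carrier G" using Cs classes_sub by auto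
  have "(\<Sum>xs\<in>listset Cs. WW G Cs (gprod G xs)) = (\<Sum>xs\<in>listset Cs. \<Sum>g\<in>carrier G. if gprod G xs = g then WW G Cs g else 0)"
    by (intro sum.cong refl) (simp add: fin listset_carrier[OF Cs])
  also have "\<dots> = (\<Sum>g\<in>carrier G. \<Sum>xs\<in>listset Cs. if gprod G xs = g then WW G Cs g else 0)"
    by (rule sum.swap)
  also have "\<dots> = (\<Sum>g\<in>carrier G. WW G Cs g * WW G Cs g)"
    by (intro sum.cong refl) (simp add: WW_def sum_distrib_left if_distrib cong: if_cong)
  finally show ?thesis by (simp add: power2_eq_square)
qed

definition phi :: "'a set \<Rightarrow> nat" where "phi C = card (carrier G) div card C"

lemma stab_phi: "x \<in> carrier G \<Longrightarrow> stab x = phi (cc x)"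
proof -
  assume x: "x \<in> carrier G"
  have "card (cc x) > 0" using fin_cc[OF x] cc_self[OF x] card_gt_0_iff by blast
  then show ?thesis using stab_cc[OF x] unfolding phi_def by (metis nonzero_mult_div_cancel_right less_not_refl2)
qed

lemma phi_card: "C \<in> conj_classes G \<Longrightarrow> phi C * card C = card (carrier G)"
  by (auto simp: conj_classes_def stab_phi[symmetric] stab_cc)

lemma image_map_cc: "(map cc) ` tuples G n = classlists n"
proof (intro equalityI subsetI)
  fix Cs assume "Cs \<in> map cc ` tuples G n"
  then show "Cs \<in> classlists n" by (auto simp: classlists_def tuples_def conj_classes_def intro!: imageI)
next
  fix Cs assume Cs: "Cs \<in> classlists n"
  define r where "r C = (SOME x. x \<in> carrier G \<and> cc x = C)" for C
  have r: "r C \<in> carrier G \<and> cc (r C) = C" if "C \<in> set Cs" for C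
  proof -
    have "\<exists>x. x \<in> carrier G \<and> cc x = C" using that Cs by (auto simp: classlists_def conj_classes_def)
    then show ?thesis unfolding r_def by (rule someI_ex)
  qed
  have "map cc (map r Cs) = Cs" using r by (induction Cs) auto
  moreover have "map r Cs \<in> tuples G n" using r Cs by (auto simp: tuples_def classlists_def)
  ultimately show "Cs \<in> map cc ` tuples G n" by (metis image_eqI)
qed

lemma fiber_map_cc:
  assumes Cs: "Cs \<in> classlists n"
  shows "{xs \<in> tuples G n. map cc xs = Cs} = listset Cs"
proof (intro equalityI subsetI)
  fix xs assume xs: "xs \<in> {xs \<in> tuples G n. map cc xs = Cs}"
  then have "\<forall>t<length Cs. xs ! t \<in> Cs ! t"
    by (auto simp: tuples_def intro!: cc_self nth_mem)
  then show "xs \<in> listset Cs" using xs by (auto simp: listset_char)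
next
  fix xs assume xs: "xs \<in> listset Cs"
  have len: "length xs = n" "length Cs = n" using xs Cs by (auto simp: listset_char classlists_def)
  have cls: "Cs ! t \<in> conj_classes G" if "t < n" for t using Cs that len by (auto simp: classlists_def)
  have mem: "xs ! t \<in> Cs ! t" if "t < n" for t using xs that len by (auto simp: listset_char)
  have xc: "xs ! t \<in> carrier G" if "t < n" for t using mem[OF that] classes_sub[OF cls[OF that]] by auto
  have "cc (xs ! t) = Cs ! t" if tn: "t < n" for t
  proof -
    obtain x where x: "x \<in> carrier G" "Cs ! t = cc x" using cls[OF tn] by (auto simp: conj_classes_def)
    then show ?thesis using cc_eq[OF x(1)] mem[OF tn] by simp
  qed
  then have "map cc xs = Cs" using len by (auto intro: nth_equalityI)
  moreover have "xs \<in> tuples G n" using xc len by (auto simp: tuples_def in_set_conv_nth)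
  ultimately show "xs \<in> {xs \<in> tuples G n. map cc xs = Cs}" by simp
qed

lemma part2_nat:
  "(\<Sum>xs\<in>tuples G n. card (stab_prod G xs))
   = (\<Sum>Cs\<in>classlists n. prod_list (map phi Cs) * (\<Sum>Om\<in>conj_classes G. card Om * WW G Cs (SOME y. y \<in> Om) ^ 2))"
proof -
  have "(\<Sum>xs\<in>tuples G n. card (stab_prod G xs))
      = (\<Sum>xs\<in>tuples G n. prod_list (map phi (map cc xs)) * WW G (map cc xs) (gprod G xs))"
  proof (rule sum.cong[OF refl])
    fix xs assume xs: "xs \<in> tuples G n"
    have "card (stab_prod G xs) = prod_list (map stab xs) * WW G (map cc xs) (gprod G xs)"
      using stab_card[OF xs] count_bs[OF tuples_set[OF xs], of "gprod G xs"] tuples_len[OF xs] tuples_set[OF xs] by simp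
    moreover have "map stab xs = map phi (map cc xs)" using tuples_set[OF xs] by (auto simp: stab_phi)
    ultimately show "card (stab_prod G xs) = prod_list (map phi (map cc xs)) * WW G (map cc xs) (gprod G xs)" by simp
  qed
  also have "\<dots> = (\<Sum>Cs\<in>map cc ` tuples G n. \<Sum>xs\<in>{xs \<in> tuples G n. map cc xs = Cs}. prod_list (map phi (map cc xs)) * WW G (map cc xs) (gprod G xs))"
    by (rule sum.image_gen[OF finite_tuples[OF fin]])
  also have "\<dots> = (\<Sum>Cs\<in>classlists n. \<Sum>xs\<in>listset Cs. prod_list (map phi Cs) * WW G Cs (gprod G xs))"
    unfolding image_map_cc
  proof (rule sum.cong[OF refl])
    fix Cs assume Cs: "Cs \<in> classlists n"
    show "(\<Sum>xs\<in>{xs \<in> tuples G n. map cc xs = Cs}. prod_list (map phi (map cc xs)) * WW G (map cc xs) (gprod G xs))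
        = (\<Sum>xs\<in>listset Cs. prod_list (map phi Cs) * WW G Cs (gprod G xs))"
      unfolding fiber_map_cc[OF Cs, symmetric] by (rule sum.cong) auto
  qed
  also have "\<dots> = (\<Sum>Cs\<in>classlists n. prod_list (map phi Cs) * (\<Sum>Om\<in>conj_classes G. card Om * WW G Cs (SOME y. y \<in> Om) ^ 2))"
  proof (rule sum.cong[OF refl])
    fix Cs assume Cs: "Cs \<in> classlists n"
    have Cs': "set Cs \<subseteq> conj_classes G" using Cs by (simp add: classlists_def)
    show "(\<Sum>xs\<in>listset Cs. prod_list (map phi Cs) * WW G Cs (gprod G xs)) =
        prod_list (map phi Cs) * (\<Sum>Om\<in>conj_classes G. card Om * WW G Cs (SOME y. y \<in> Om) ^ 2)"
      by (simp add: sum_distrib_left[symmetric] sum_WW_listset[OF Cs'] sum_sq_classes[OF Cs'])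
  qed
  finally show ?thesis .
qed

lemma class_mult_WW:
  assumes "set Cs \<subseteq> conj_classes G"
  shows "class_mult G Cs Om = WW G Cs (SOME y. y \<in> Om)"
proof -
  have f: "finite (listset Cs)" using assms classes_sub by (intro finite_listset) auto
  have "class_mult G Cs Om = card {xs \<in> listset Cs. gprod G xs = (SOME y. y \<in> Om)}"
    unfolding class_mult_def listset_char by (rule arg_cong[where f=card]) auto
  then show ?thesis unfolding WW_def using card_filter_sum[OF f] by simp
qed

lemma prod_list_phi_card:
  "set Cs \<subseteq> conj_classes G \<Longrightarrow> prod_list (map phi Cs) * prod_list (map card Cs) = card (carrier G) ^ length Cs"
proof (induction Cs)
  case Nil then show ?case by simp
next
  case (Cons C Cs)
  then have "phi C * card C = card (carrier G)" by (simp add: phi_card)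
  then show ?case using Cons by (simp add: mult_ac)
qed

lemma card_pos: "card (carrier G) > 0"
  using fin one_closed card_gt_0_iff by blast

end

lemma prod_list_nth: "prod_list (map f xs) = (\<Prod>t<length xs. f (xs!t))"
  by (induction xs) (simp_all add: prod.lessThan_Suc_shift del: prod.lessThan_Suc)

theorem mainTheorem11:
  fixes G (structure) and n :: nat
  assumes "group G" and "finite (carrier G)" and "n \<ge> 1"
  defines "P \<equiv> real (card {as \<in> tuples G (2*n). gprod G (rev as) = gprod G as})
                 / real (card (carrier G)) ^ (2*n)"
  shows "P = real (\<Sum>xs\<in>tuples G n. card (stab_prod G xs)) / real (card (carrier G)) ^ (2*n)
       \<and> P = (\<Sum>Cs\<in>{Cs. length Cs = n \<and> set Cs \<subseteq> conj_classes G}. \<Sum>Om\<in>conj_classes G.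
               real (card Om) * real (class_mult G Cs Om) ^ 2
               / ((\<Prod>t<n. real (card (Cs ! t))) * real (card (carrier G)) ^ n))"
proof -
  interpret fgroup G using assms(1,2) by (simp add: fgroup_def fgroup_axioms_def)
  let ?k = "real (card (carrier G))"
  have P1: "P = real (\<Sum>xs\<in>tuples G n. card (stab_prod G xs)) / ?k ^ (2*n)"
    unfolding P_def part1 ..
  have key: "real (prod_list (map phi Cs)) / ?k ^ (2*n) = 1 / ((\<Prod>t<n. real (card (Cs ! t))) * ?k ^ n)"
    if Cs: "Cs \<in> classlists n" for Cs
  proof -
    have len: "length Cs = n" and sub: "set Cs \<subseteq> conj_classes G" using Cs by (auto simp: classlists_def)
    have e: "real (prod_list (map phi Cs)) * (\<Prod>t<n. real (card (Cs ! t))) = ?k ^ n"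
    proof -
      have "prod_list (map phi Cs) * (\<Prod>t<n. card (Cs ! t)) = card (carrier G) ^ n"
        using prod_list_phi_card[OF sub] len prod_list_nth[of card Cs] by simp
      then have "real (prod_list (map phi Cs) * (\<Prod>t<n. card (Cs ! t))) = ?k ^ n"
        by (simp only: of_nat_power)
      then show ?thesis by (simp only: of_nat_mult of_nat_prod)
    qed
    have kp: "?k > 0" using card_pos by simp
    have q: "(\<Prod>t<n. real (card (Cs ! t))) \<noteq> 0"
    proof
      assume "(\<Prod>t<n. real (card (Cs ! t))) = 0"
      then have "?k ^ n = 0" using e by (simp only: mult_zero_right)
      then show False using kp by simp
    qed
    have "?k ^ (2*n) = ?k ^ n * ?k ^ n" by (simp add: power_add[symmetric] mult_2)
    then show ?thesis using e q kp by (simp add: field_simps)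
  qed
  have "P = (\<Sum>Cs\<in>classlists n. real (prod_list (map phi Cs)) / ?k ^ (2*n) *
              (\<Sum>Om\<in>conj_classes G. real (card Om) * real (WW G Cs (SOME y. y \<in> Om)) ^ 2))"
    unfolding P1 part2_nat by (simp add: sum_divide_distrib)
  also have "\<dots> = (\<Sum>Cs\<in>classlists n. \<Sum>Om\<in>conj_classes G.
               real (card Om) * real (class_mult G Cs Om) ^ 2
               / ((\<Prod>t<n. real (card (Cs ! t))) * ?k ^ n))"
  proof (rule sum.cong[OF refl])
    fix Cs assume Cs: "Cs \<in> classlists n"
    have sub: "set Cs \<subseteq> conj_classes G" using Cs by (auto simp: classlists_def)
    show "real (prod_list (map phi Cs)) / ?k ^ (2*n) *
              (\<Sum>Om\<in>conj_classes G. real (card Om) * real (WW G Cs (SOME y. y \<in> Om)) ^ 2) =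
          (\<Sum>Om\<in>conj_classes G. real (card Om) * real (class_mult G Cs Om) ^ 2
               / ((\<Prod>t<n. real (card (Cs ! t))) * ?k ^ n))"
      unfolding key[OF Cs] by (simp add: sum_distrib_left class_mult_WW[OF sub])
  qed
  finally have P2: "P = (\<Sum>Cs\<in>{Cs. length Cs = n \<and> set Cs \<subseteq> conj_classes G}. \<Sum>Om\<in>conj_classes G.
               real (card Om) * real (class_mult G Cs Om) ^ 2
               / ((\<Prod>t<n. real (card (Cs ! t))) * ?k ^ n))"
    by (simp add: classlists_def)
  show ?thesis using P1 P2 by blast
qed

end
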